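(* Let $(\Gamma,S)$ be a marked group, let $X$ be a standard Borel space, and let $a:\Gamma\curvearrowright X$ be a free Borel action whose Borel asymptotic separation index is $1$. Suppose that no element of $S$ has odd order. Then $\chi_B'(G(a,S))\le |S|+1$.
   Context: A marked group $(\Gamma,S)$ is a group $\Gamma$ together with a finite symmetric generating set $S$ not containing the identity. For a free Borel action $a:\Gamma\curvearrowright X$, the Schreier graph $G(a,S)$ is the graph on $X$ in which $x\neq y$ are adjacent iff $\gamma\cdot_a x=y$ for some $\gamma\in S$. An edge coloring of a graph is a map from its edges to a set of colors giving distinct colors to edges sharing a vertex; $\chi_B'(G)$ is the least cardinality of a color set for which a Borel edge coloring of $G$ exists. For a graph $G$ and positive integer $N$, $G^{\le N}$ is the graph joining two vertices iff there is a $G$-path of length at most $N$ between them. For a locally finite Borel graph $G$ on $X$, the Borel asymptotic separation index $\mathrm{asi}_B(G)$ is the least $s\in\omega$ such that for every positive integer $N$ there is a partition of $X$ into Borel sets $U_0,\dots,U_s$ such that each induced graph $G^{\le N}\upharpoonright U_i$ has only finite connected components. The Borel asymptotic separation index of the action $a$ is $\mathrm{asi}_B(G(a,S))$ (this does not depend on the choice of finite generating set). *)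

theory Defs
  imports "HOL-Analysis.Analysis" "HOL-Algebra.Multiplicative_Group" "HOL-Algebra.Generated_Groups"
    "HOL-Library.Extended_Nat"
begin

definition marked_group :: "('g, 'b) monoid_scheme \<Rightarrow> 'g set \<Rightarrow> bool" where
  "marked_group \<Gamma> S \<longleftrightarrow> group \<Gamma> \<and> S \<subseteq> carrier \<Gamma> \<and> finite S \<and> \<one>\<^bsub>\<Gamma>\<^esub> \<notin> S
     \<and> (\<forall>s\<in>S. inv\<^bsub>\<Gamma>\<^esub> s \<in> S) \<and> generate \<Gamma> S = carrier \<Gamma>"

text \<open>A Borel action of \<Gamma> on the standard Borel space given by the Borel sets of the
  Polish space 'x (acting maps are Borel measurable).\<close>
definition borel_action :: "('g, 'b) monoid_scheme \<Rightarrow> ('g \<Rightarrow> 'x::topological_space \<Rightarrow> 'x) \<Rightarrow> bool" where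
  "borel_action \<Gamma> a \<longleftrightarrow>
     (\<forall>x. a \<one>\<^bsub>\<Gamma>\<^esub> x = x)
   \<and> (\<forall>g\<in>carrier \<Gamma>. \<forall>h\<in>carrier \<Gamma>. \<forall>x. a (g \<otimes>\<^bsub>\<Gamma>\<^esub> h) x = a g (a h x))
   \<and> (\<forall>g\<in>carrier \<Gamma>. a g \<in> borel_measurable borel)"

definition free_action :: "('g, 'b) monoid_scheme \<Rightarrow> ('g \<Rightarrow> 'x \<Rightarrow> 'x) \<Rightarrow> bool" where
  "free_action \<Gamma> a \<longleftrightarrow> (\<forall>g\<in>carrier \<Gamma>. \<forall>x. a g x = x \<longrightarrow> g = \<one>\<^bsub>\<Gamma>\<^esub>)"

definition schreier_graph :: "('g \<Rightarrow> 'x \<Rightarrow> 'x) \<Rightarrow> 'g set \<Rightarrow> 'x \<Rightarrow> 'x \<Rightarrow> bool" where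
  "schreier_graph a S x y \<longleftrightarrow> x \<noteq> y \<and> (\<exists>\<gamma>\<in>S. a \<gamma> x = y)"

definition graph_power_le :: "('x \<Rightarrow> 'x \<Rightarrow> bool) \<Rightarrow> nat \<Rightarrow> 'x \<Rightarrow> 'x \<Rightarrow> bool" where
  "graph_power_le G N x y \<longleftrightarrow> x \<noteq> y \<and> (\<exists>k\<le>N. (G ^^ k) x y)"

definition induced_graph :: "('x \<Rightarrow> 'x \<Rightarrow> bool) \<Rightarrow> 'x set \<Rightarrow> 'x \<Rightarrow> 'x \<Rightarrow> bool" where
  "induced_graph G U x y \<longleftrightarrow> x \<in> U \<and> y \<in> U \<and> G x y"

definition finite_components :: "('x \<Rightarrow> 'x \<Rightarrow> bool) \<Rightarrow> 'x set \<Rightarrow> bool" where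
  "finite_components G V \<longleftrightarrow> (\<forall>x\<in>V. finite {y. (G\<^sup>*\<^sup>*) x y})"

definition asi_witness :: "('x::topological_space \<Rightarrow> 'x \<Rightarrow> bool) \<Rightarrow> nat \<Rightarrow> bool" where
  "asi_witness G s \<longleftrightarrow> (\<forall>N::nat. N > 0 \<longrightarrow>
     (\<exists>U :: nat \<Rightarrow> 'x set.
        (\<forall>i\<le>s. U i \<in> sets borel)
      \<and> (\<forall>i\<le>s. \<forall>j\<le>s. i \<noteq> j \<longrightarrow> U i \<inter> U j = {})
      \<and> (\<Union>i\<le>s. U i) = UNIV
      \<and> (\<forall>i\<le>s. finite_components (induced_graph (graph_power_le G N) (U i)) (U i))))"

definition asi_B :: "('x::topological_space \<Rightarrow> 'x \<Rightarrow> bool) \<Rightarrow> enat" where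
  "asi_B G = (if \<exists>s. asi_witness G s then enat (LEAST s. asi_witness G s) else \<infinity>)"

definition borel_edge_coloring ::
  "('x::topological_space \<Rightarrow> 'x \<Rightarrow> bool) \<Rightarrow> 'c set \<Rightarrow> ('x \<Rightarrow> 'x \<Rightarrow> 'c) \<Rightarrow> bool" where
  "borel_edge_coloring G C c \<longleftrightarrow>
     (\<forall>x y. G x y \<longrightarrow> c x y \<in> C \<and> c x y = c y x)
   \<and> (\<forall>x y z. G x y \<longrightarrow> G x z \<longrightarrow> y \<noteq> z \<longrightarrow> c x y \<noteq> c x z)
   \<and> (\<forall>k\<in>C. {(x, y). G x y \<and> c x y = k} \<in> sets (borel \<Otimes>\<^sub>M borel))"

end

theory Submission imports Defs begin

locale act =
  fixes \<Gamma> :: "('g, 'b) monoid_scheme" (structure) and S :: "'g set"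
    and a :: "'g \<Rightarrow> 'x::polish_space \<Rightarrow> 'x"
  assumes mg: "marked_group \<Gamma> S"
    and ba: "borel_action \<Gamma> a"
    and fa: "free_action \<Gamma> a"
begin

sublocale group \<Gamma> using mg by (simp add: marked_group_def)

lemma S_carr: "S \<subseteq> carrier \<Gamma>" and S_fin: "finite S" and one_S: "\<one> \<notin> S"
  and S_inv: "s \<in> S \<Longrightarrow> inv s \<in> S"
  using mg by (auto simp: marked_group_def)

lemma S_carr': "s \<in> S \<Longrightarrow> s \<in> carrier \<Gamma>" using S_carr by auto

lemma act_one[simp]: "a \<one> x = x" using ba by (simp add: borel_action_def)
lemma act_mult: "g \<in> carrier \<Gamma> \<Longrightarrow> h \<in> carrier \<Gamma> \<Longrightarrow> a (g \<otimes> h) x = a g (a h x)"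
  using ba by (simp add: borel_action_def)
lemma act_meas[measurable]: "g \<in> carrier \<Gamma> \<Longrightarrow> a g \<in> borel_measurable borel"
  using ba by (simp add: borel_action_def)
lemma free: "g \<in> carrier \<Gamma> \<Longrightarrow> a g x = x \<Longrightarrow> g = \<one>"
  using fa unfolding free_action_def by blast


lemma act_inv1[simp]: "g \<in> carrier \<Gamma> \<Longrightarrow> a (inv g) (a g x) = x"
  by (simp add: act_mult[symmetric])
lemma act_inv2[simp]: "g \<in> carrier \<Gamma> \<Longrightarrow> a g (a (inv g) x) = x"
  by (simp add: act_mult[symmetric])

lemma act_inj: "g \<in> carrier \<Gamma> \<Longrightarrow> h \<in> carrier \<Gamma> \<Longrightarrow> a g x = a h x \<Longrightarrow> g = h"
proof -
  assume g: "g \<in> carrier \<Gamma>" and h: "h \<in> carrier \<Gamma>" and e: "a g x = a h x"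
  have "a (inv h \<otimes> g) x = x" using g h e by (simp add: act_mult)
  moreover have "inv h \<otimes> g \<in> carrier \<Gamma>" using g h by simp
  ultimately have 1: "inv h \<otimes> g = \<one>" using free by blast
  have "g = h \<otimes> (inv h \<otimes> g)" using g h by (simp add: m_assoc[symmetric])
  thus "g = h" using 1 h by simp
qed

abbreviation "G \<equiv> schreier_graph a S"

lemma G_step: "s \<in> S \<Longrightarrow> G x (a s x)"
proof -
  assume s: "s \<in> S"
  have "a s x \<noteq> x" using free[OF S_carr'[OF s]] one_S s by metis
  thus ?thesis unfolding schreier_graph_def using s by metis
qed

lemma G_E: "G x y \<Longrightarrow> \<exists>s\<in>S. y = a s x"
  unfolding schreier_graph_def by auto

lemma G_sym: "G x y \<Longrightarrow> G y x"
proof -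
  assume "G x y"
  then obtain s where s: "s \<in> S" "y = a s x" using G_E by blast
  have "x = a (inv s) y" using s S_carr' by simp
  thus "G y x" using G_step S_inv s by metis
qed

lemma G_pow_sym: "(G ^^ n) x y \<Longrightarrow> (G ^^ n) y x"
proof (induction n arbitrary: x y)
  case 0 thus ?case by simp
next
  case (Suc n)
  then obtain z where "(G ^^ n) x z" "G z y" by auto
  hence "(G ^^ n) z x" "G y z" using Suc.IH[of x z] G_sym[of z y] by blast+
  thus ?case by (rule relpowp_Suc_I2[rotated])
qed


fun W :: "nat \<Rightarrow> 'g set" where
  "W 0 = {\<one>}"
| "W (Suc r) = W r \<union> (\<lambda>(w, s). w \<otimes> s) ` (W r \<times> S)"

lemma W_carr: "W r \<subseteq> carrier \<Gamma>"
  by (induction r) (use S_carr in auto)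

lemma W_fin: "finite (W r)"
  by (induction r) (use S_fin in auto)

lemma W_mono: "r \<le> r' \<Longrightarrow> W r \<subseteq> W r'"
proof (induction r' rule: dec_induct)
  case base thus ?case by simp
next
  case (step n) thus ?case by auto
qed

lemma W_path: "g \<in> W r \<Longrightarrow> \<exists>j\<le>r. (G ^^ j) z (a g z)"
proof (induction r arbitrary: g z)
  case 0 thus ?case by auto
next
  case (Suc r)
  show ?case
  proof (cases "g \<in> W r")
    case True thus ?thesis using Suc.IH le_SucI by blast
  next
    case False
    then obtain w s where ws: "w \<in> W r" "s \<in> S" "g = w \<otimes> s" using Suc.prems by auto
    obtain j where j: "j \<le> r" "(G ^^ j) (a s z) (a w (a s z))" using Suc.IH[OF ws(1)] by blast
    have wc: "w \<in> carrier \<Gamma>" using ws(1) W_carr by blast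
    have "a g z = a w (a s z)" using ws wc S_carr' by (simp add: act_mult)
    moreover have "(G ^^ Suc j) z (a w (a s z))" using G_step[OF ws(2)] j(2) by (rule relpowp_Suc_I2)
    ultimately show ?thesis using j(1) by (metis Suc_le_mono)
  qed
qed

definition Zs :: "'x set \<Rightarrow> nat \<Rightarrow> 'x set" where
  "Zs U0 r = {x. \<exists>g\<in>W r. a g x \<in> U0}"

definition exact :: "'x set \<Rightarrow> nat \<Rightarrow> 'x \<Rightarrow> bool" where
  "exact U0 r x \<longleftrightarrow> x \<in> Zs U0 r \<and> (r = 0 \<or> x \<notin> Zs U0 (r - 1))"

lemma Z_mono: "r \<le> r' \<Longrightarrow> Zs U0 r \<subseteq> Zs U0 r'"
  unfolding Zs_def using W_mono by blast

lemma Z_step: "x \<in> Zs U0 r \<Longrightarrow> s \<in> S \<Longrightarrow> a s x \<in> Zs U0 (Suc r)"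
proof -
  assume x: "x \<in> Zs U0 r" and s: "s \<in> S"
  then obtain g where g: "g \<in> W r" "a g x \<in> U0" unfolding Zs_def by blast
  have gc: "g \<in> carrier \<Gamma>" using g W_carr by blast
  have sc: "s \<in> carrier \<Gamma>" using s S_carr by blast
  have "g \<otimes> inv s \<in> W (Suc r)" using g(1) S_inv[OF s] by force
  moreover have "a (g \<otimes> inv s) (a s x) = a g x" using gc sc by (simp add: act_mult)
  ultimately have "\<exists>g\<in>W (Suc r). a g (a s x) \<in> U0" using g(2) by metis
  thus ?thesis unfolding Zs_def by simp
qed

lemma U0_Z: "x \<in> U0 \<Longrightarrow> x \<in> Zs U0 r"
proof -
  assume "x \<in> U0"
  hence "x \<in> Zs U0 0" unfolding Zs_def by simp
  thus ?thesis using Z_mono[of 0 r] by blast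
qed

lemma exact_unique: "exact U0 r x \<Longrightarrow> exact U0 r' x \<Longrightarrow> r = r'"
proof (rule ccontr)
  assume e: "exact U0 r x" "exact U0 r' x" and ne: "r \<noteq> r'"
  { fix r r' assume e: "exact U0 r x" "exact U0 r' x" and lt: "r < r'"
    have "r \<le> r' - 1" using lt by simp
    hence "x \<in> Zs U0 (r' - 1)" using e(1) Z_mono[of r "r' - 1" U0] unfolding exact_def by blast
    hence False using e(2) lt unfolding exact_def by auto }
  thus False using e ne by (metis linorder_neqE_nat)
qed

lemma Z_meas: "U0 \<in> sets borel \<Longrightarrow> Zs U0 r \<in> sets borel"
proof -
  assume U: "U0 \<in> sets borel"
  have "Zs U0 r = (\<Union>g\<in>W r. a g -` U0)" unfolding Zs_def by auto
  moreover have "a g -` U0 \<in> sets borel" if "g \<in> W r" for g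
    using measurable_sets[OF act_meas U] that W_carr by auto
  ultimately show ?thesis using W_fin by auto
qed


abbreviation pw :: "'g \<Rightarrow> nat \<Rightarrow> 'g" where "pw h k \<equiv> h [^] k"

lemma orb_Suc: assumes h: "h \<in> carrier \<Gamma>" shows "a (pw h (Suc k)) x = a h (a (pw h k) x)"
proof -
  have "pw h (Suc k) = h \<otimes> pw h k" using h by (rule nat_pow_Suc2)
  thus ?thesis using h by (simp add: act_mult del: nat_pow_Suc)
qed

lemma orb_add: assumes h: "h \<in> carrier \<Gamma>" shows "a (pw h (i + j)) x = a (pw h i) (a (pw h j) x)"
proof -
  have "pw h (i + j) = pw h i \<otimes> pw h j" using h by (simp add: nat_pow_mult)
  thus ?thesis using h by (simp add: act_mult)
qed

lemma orb_eq: assumes h: "h \<in> carrier \<Gamma>" and e: "a (pw h i) x = a (pw h j) x" and ij: "i \<le> j"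
  shows "ord h dvd (j - i)"
proof -
  have "a (pw h j) x = a (pw h (j - i)) (a (pw h i) x)" using orb_add[OF h, of "j - i" i x] ij by simp
  hence "a (pw h (j - i)) (a (pw h i) x) = a (pw h i) x" using e by simp
  hence "pw h (j - i) = \<one>" using free h by simp
  thus ?thesis using pow_eq_id h by blast
qed

lemma orb_per: assumes h: "h \<in> carrier \<Gamma>" and d: "ord h dvd d" shows "a (pw h d) x = x"
proof -
  have "pw h d = \<one>" using pow_eq_id[OF h] d by blast
  thus ?thesis by simp
qed

lemma orb_inj: assumes h: "h \<in> carrier \<Gamma>" and o: "ord h = 0" shows "inj (\<lambda>k. a (pw h k) x)"
proof (rule injI)
  fix i j :: nat assume e: "a (pw h i) x = a (pw h j) x"
  show "i = j"
  proof (cases "i \<le> j")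
    case True thus ?thesis using orb_eq[OF h e] o by simp
  next
    case False thus ?thesis using orb_eq[OF h e[symmetric]] o by simp
  qed
qed

lemma line_hits:
  assumes p: "p \<in> S" and o: "ord p = 0" and c: "c \<ge> 2" and N: "2 * c \<le> N"
    and part: "\<And>x. x \<in> U0 \<or> x \<in> U1"
    and fc0: "finite_components (induced_graph (graph_power_le G N) U0) U0"
    and fc1: "finite_components (induced_graph (graph_power_le G N) U1) U1"
  shows "\<exists>k\<ge>1. exact U0 c (a (pw (inv p) k) x) \<and> exact U0 (c - 1) (a p (a (pw (inv p) k) x))"
proof -
  define h where "h = inv p"
  have hS: "h \<in> S" using S_inv p h_def by simp
  have hc: "h \<in> carrier \<Gamma>" using hS S_carr by blast
  have pc: "p \<in> carrier \<Gamma>" using p S_carr by blast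
  have oh: "ord h = 0" using o pc h_def by simp
  define y where "y k = a (pw h k) x" for k
  have ySuc: "y (Suc k) = a h (y k)" for k unfolding y_def using orb_Suc[OF hc] by simp
  have yinj: "inj y" unfolding y_def using orb_inj[OF hc oh] .
  have Gy: "G (y k) (y (Suc k))" for k using ySuc G_step[OF hS] by simp
  have Npos: "1 \<le> N" using N c by simp
  have Gy': "graph_power_le G N (y k) (y (Suc k))" for k
  proof -
    have "y k \<noteq> y (Suc k)" using yinj by (simp add: inj_eq)
    moreover have "(G ^^ 1) (y k) (y (Suc k))" using Gy[of k] by (metis relpowp_1)
    ultimately show ?thesis unfolding graph_power_le_def using Npos by blast
  qed
  have A: "\<exists>k0. y k0 \<in> U0"
  proof (rule ccontr)
    assume "\<not> ?thesis"
    hence U1: "y k \<in> U1" for k using part by blast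
    define R where "R = induced_graph (graph_power_le G N) U1"
    have "R\<^sup>*\<^sup>* (y 0) (y k)" for k
    proof (induction k)
      case 0 thus ?case by simp
    next
      case (Suc k)
      have "R (y k) (y (Suc k))" unfolding R_def induced_graph_def using U1 Gy' by blast
      thus ?case using Suc.IH by (simp add: rtranclp.rtrancl_into_rtrancl)
    qed
    hence "range y \<subseteq> {z. R\<^sup>*\<^sup>* (y 0) z}" by auto
    moreover have "finite {z. R\<^sup>*\<^sup>* (y 0) z}" using fc1 U1[of 0] unfolding finite_components_def R_def by blast
    ultimately have "finite (range y)" by (rule finite_subset)
    thus False using yinj finite_imageD by (metis infinite_UNIV_nat)
  qed
  have B: "\<exists>K>k0. y K \<notin> Zs U0 (c - 1)" for k0
  proof (rule ccontr)
    assume "\<not> ?thesis"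
    hence inZ: "K > k0 \<Longrightarrow> y K \<in> Zs U0 (c - 1)" for K by blast
    hence "\<forall>K. \<exists>g. K > k0 \<longrightarrow> g \<in> W (c - 1) \<and> a g (y K) \<in> U0" unfolding Zs_def by blast
    then obtain g where g: "\<And>K. K > k0 \<Longrightarrow> g K \<in> W (c - 1) \<and> a (g K) (y K) \<in> U0" by metis
    define u where "u K = a (g K) (y K)" for K
    define R where "R = induced_graph (graph_power_le G N) U0"
    have uU: "K > k0 \<Longrightarrow> u K \<in> U0" for K using g[of K] unfolding u_def by blast
    have stepR: "R\<^sup>*\<^sup>* (u K) (u (Suc K))" if K: "K > k0" for K
    proof -
      obtain j1 where j1: "j1 \<le> c - 1" "(G ^^ j1) (y K) (u K)" using W_path[of "g K" "c - 1" "y K"] g[OF K] unfolding u_def by blast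
      have K': "Suc K > k0" using K by simp
      obtain j2 where j2: "j2 \<le> c - 1" "(G ^^ j2) (y (Suc K)) (u (Suc K))" using W_path[of "g (Suc K)" "c - 1" "y (Suc K)"] g[OF K'] unfolding u_def by blast
      have "(G ^^ Suc j2) (y K) (u (Suc K))" using Gy j2(2) by (rule relpowp_Suc_I2)
      hence "(G ^^ (j1 + Suc j2)) (u K) (u (Suc K))" using G_pow_sym[OF j1(2)] unfolding relpowp_add by blast
      moreover have "j1 + Suc j2 \<le> N" using j1 j2 N c by linarith
      ultimately have "u K = u (Suc K) \<or> graph_power_le G N (u K) (u (Suc K))"
        unfolding graph_power_le_def by blast
      thus ?thesis using uU[OF K] uU[OF K'] unfolding R_def induced_graph_def by auto
    qed
    have reach: "R\<^sup>*\<^sup>* (u (Suc k0)) (u K)" if "K \<ge> Suc k0" for K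
      using that
    proof (induction K rule: dec_induct)
      case base thus ?case by simp
    next
      case (step n)
      have "k0 < n" using step.hyps by simp
      thus ?case using stepR[of n] step.IH by (meson rtranclp_trans)
    qed
    define F where "F = {z. R\<^sup>*\<^sup>* (u (Suc k0)) z}"
    have Ffin: "finite F" using fc0 uU[of "Suc k0"] unfolding finite_components_def R_def F_def by simp
    have "y ` {Suc k0..} \<subseteq> (\<lambda>(g, z). a (inv g) z) ` (W (c - 1) \<times> F)"
    proof
      fix z assume "z \<in> y ` {Suc k0..}"
      then obtain K where K: "K \<ge> Suc k0" "z = y K" by auto
      have gK: "g K \<in> W (c - 1)" using g K by simp
      have "g K \<in> carrier \<Gamma>" using gK W_carr by blast
      hence "z = a (inv (g K)) (u K)" using K u_def by simp
      moreover have "u K \<in> F" using reach[OF K(1)] F_def by simp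
      ultimately show "z \<in> (\<lambda>(g, z). a (inv g) z) ` (W (c - 1) \<times> F)" using gK by force
    qed
    moreover have "finite ((\<lambda>(g, z). a (inv g) z) ` (W (c - 1) \<times> F))" using W_fin Ffin by simp
    ultimately have "finite (y ` {Suc k0..})" by (rule finite_subset)
    hence "finite {Suc k0..}" using yinj by (simp add: finite_image_iff inj_on_subset)
    thus False using infinite_Ici by blast
  qed
  obtain k0 where k0: "y k0 \<in> U0" using A by blast
  define k where "k = (LEAST k. k0 < k \<and> y k \<notin> Zs U0 (c - 1))"
  have kex: "\<exists>K. k0 < K \<and> y K \<notin> Zs U0 (c - 1)" using B by blast
  have k1: "k0 < k" "y k \<notin> Zs U0 (c - 1)" using LeastI_ex[OF kex] k_def by auto
  then obtain m where m: "k = Suc m" by (cases k) auto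
  have ym: "y m \<in> Zs U0 (c - 1)"
  proof (cases "m = k0")
    case True thus ?thesis using k0 U0_Z by simp
  next
    case False
    hence "k0 < m" using k1 m by simp
    moreover have "m < k" using m by simp
    ultimately show ?thesis using not_less_Least[of m "\<lambda>k. k0 < k \<and> y k \<notin> Zs U0 (c - 1)"] k_def by blast
  qed
  have yk: "y k = a h (y m)" using m ySuc by simp
  have "y k \<in> Zs U0 (Suc (c - 1))" using Z_step[OF ym hS] yk by simp
  hence e1: "exact U0 c (y k)" using k1 c unfolding exact_def by simp
  have bk: "a p (y k) = y m" using yk h_def pc by simp
  have "y m \<notin> Zs U0 (c - 2)"
  proof
    assume "y m \<in> Zs U0 (c - 2)"
    hence "y k \<in> Zs U0 (Suc (c - 2))" using Z_step[OF _ hS] yk by simp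
    moreover have "Suc (c - 2) = c - 1" using c by simp
    ultimately show False using k1 by simp
  qed
  moreover have "c - 1 - 1 = c - 2" by simp
  ultimately have e2: "exact U0 (c - 1) (a p (y k))" using bk ym c unfolding exact_def by metis
  show ?thesis using e1 e2 m unfolding y_def h_def by (intro exI[of _ k]) simp
qed


lemma orb_Suc': assumes h: "h \<in> carrier \<Gamma>" shows "a (pw h (Suc k)) x = a (pw h k) (a h x)"
  using h by (simp add: act_mult)

lemma orb_mod: assumes h: "h \<in> carrier \<Gamma>" shows "a (pw h i) x = a (pw h (i mod ord h)) x"
proof -
  have "a (pw h i) x = a (pw h (i mod ord h + ord h * (i div ord h))) x" by simp
  also have "\<dots> = a (pw h (i mod ord h)) (a (pw h (ord h * (i div ord h))) x)" by (rule orb_add[OF h])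
  also have "a (pw h (ord h * (i div ord h))) x = x" by (rule orb_per[OF h]) simp
  finally show ?thesis .
qed

definition K :: "'x set \<Rightarrow> 'g \<Rightarrow> 'x \<Rightarrow> nat" where
  "K D h x = (LEAST k. 1 \<le> k \<and> a (pw h k) x \<in> D)"

lemma K_one: "h \<in> carrier \<Gamma> \<Longrightarrow> a h x \<in> D \<Longrightarrow> K D h x = 1"
  unfolding K_def by (rule Least_equality) auto

lemma K_Suc: assumes h: "h \<in> carrier \<Gamma>" and nD: "a h x \<notin> D" and ex: "\<exists>k\<ge>1. a (pw h k) (a h x) \<in> D"
  shows "K D h x = Suc (K D h (a h x))"
proof -
  define Q where "Q j = (1 \<le> j \<and> a (pw h j) (a h x) \<in> D)" for j
  have QL: "Q (LEAST j. Q j)" using ex LeastI_ex[of Q] unfolding Q_def by blast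
  have KQ: "K D h (a h x) = (LEAST j. Q j)" unfolding K_def Q_def ..
  show ?thesis unfolding KQ unfolding K_def
  proof (rule Least_equality)
    show "1 \<le> Suc (LEAST j. Q j) \<and> a (pw h (Suc (LEAST j. Q j))) x \<in> D"
      using QL unfolding Q_def orb_Suc'[OF h] by simp
  next
    fix k assume k: "1 \<le> k \<and> a (pw h k) x \<in> D"
    then obtain j where j: "k = Suc j" by (cases k) auto
    have "j \<noteq> 0" using k j nD h by (cases j) auto
    have "a (pw h (Suc j)) x \<in> D" using k j by (simp del: nat_pow_Suc)
    hence "Q j" using \<open>j \<noteq> 0\<close> unfolding Q_def orb_Suc'[OF h] by simp
    hence "(LEAST j. Q j) \<le> j" by (rule Least_le)
    thus "Suc (LEAST j. Q j) \<le> k" using j by simp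
  qed
qed

definition hcol :: "bool \<Rightarrow> 'x set \<Rightarrow> 'g \<Rightarrow> nat \<Rightarrow> nat \<Rightarrow> nat \<Rightarrow> 'x \<Rightarrow> nat" where
  "hcol e D h A B E x = (if e \<and> x \<in> D then E else if odd (K D h x) then A else B)"

lemma hcol_proper:
  assumes h: "h \<in> carrier \<Gamma>" and ex: "\<And>z. \<exists>k\<ge>1. a (pw h k) z \<in> D"
    and ABE: "A \<noteq> B" "A \<noteq> E" "B \<noteq> E"
    and md: "\<And>z. e \<Longrightarrow> z \<in> D \<Longrightarrow> a h z \<notin> D"
    and fd: "\<And>z. \<not> e \<Longrightarrow> z \<in> D \<Longrightarrow> even (K D h z)"
  shows "hcol e D h A B E x \<noteq> hcol e D h A B E (a h x)"
proof (cases "a h x \<in> D")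
  case True
  hence K1: "K D h x = 1" using K_one h by blast
  show ?thesis
  proof (cases e)
    case True
    hence "x \<notin> D" using md \<open>a h x \<in> D\<close> by blast
    thus ?thesis using True \<open>a h x \<in> D\<close> K1 ABE unfolding hcol_def by auto
  next
    case False
    thus ?thesis using fd[OF False \<open>a h x \<in> D\<close>] K1 ABE unfolding hcol_def by auto
  qed
next
  case False
  hence KS: "K D h x = Suc (K D h (a h x))" using K_Suc[OF h False ex] by blast
  show ?thesis using False KS ABE unfolding hcol_def by auto
qed

lemma hcol_range: "hcol e D h A B E x \<in> {A, B, E}"
  unfolding hcol_def by auto

lemma hcol_E: "hcol e D h A B E x = E \<Longrightarrow> A \<noteq> E \<Longrightarrow> B \<noteq> E \<Longrightarrow> e \<and> x \<in> D"
  unfolding hcol_def by (auto split: if_splits)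

end

definition lexl :: "(nat \<Rightarrow> 'x set) \<Rightarrow> 'x \<Rightarrow> 'x \<Rightarrow> bool" where
  "lexl B x y \<longleftrightarrow> (\<exists>n. (\<forall>m<n. (x \<in> B m \<longleftrightarrow> y \<in> B m)) \<and> x \<notin> B n \<and> y \<in> B n)"

lemma lexl_irrefl: "\<not> lexl B x x"
  unfolding lexl_def by auto

lemma lexl_trans: assumes "lexl B x y" "lexl B y z" shows "lexl B x z"
proof -
  obtain n1 where n1: "\<forall>m<n1. (x \<in> B m \<longleftrightarrow> y \<in> B m)" "x \<notin> B n1" "y \<in> B n1" using assms(1) unfolding lexl_def by blast
  obtain n2 where n2: "\<forall>m<n2. (y \<in> B m \<longleftrightarrow> z \<in> B m)" "y \<notin> B n2" "z \<in> B n2" using assms(2) unfolding lexl_def by blast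
  consider "n1 < n2" | "n2 < n1" | "n1 = n2" by linarith
  thus ?thesis
  proof cases
    case 1
    hence "\<forall>m<n1. (x \<in> B m \<longleftrightarrow> z \<in> B m)" "z \<in> B n1" using n1 n2 by auto
    thus ?thesis using n1(2) unfolding lexl_def by blast
  next
    case 2
    hence "\<forall>m<n2. (x \<in> B m \<longleftrightarrow> z \<in> B m)" "x \<notin> B n2" using n1 n2 by auto
    thus ?thesis using n2(3) unfolding lexl_def by blast
  next
    case 3 thus ?thesis using n1 n2 by simp
  qed
qed

lemma lexl_asym: "lexl B x y \<Longrightarrow> \<not> lexl B y x"
  using lexl_trans lexl_irrefl by metis

lemma lexl_total: assumes sep: "\<And>x y. x \<noteq> y \<Longrightarrow> \<exists>n. x \<in> B n \<and> y \<notin> B n" and ne: "x \<noteq> y"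
  shows "lexl B x y \<or> lexl B y x"
proof -
  have "\<exists>n. (x \<in> B n) \<noteq> (y \<in> B n)" using sep[OF ne] by blast
  define n where "n = (LEAST n. (x \<in> B n) \<noteq> (y \<in> B n))"
  have d: "(x \<in> B n) \<noteq> (y \<in> B n)" using LeastI_ex[OF \<open>\<exists>n. _\<close>] n_def by simp
  have agree: "\<forall>m<n. (x \<in> B m \<longleftrightarrow> y \<in> B m)" using not_less_Least n_def by blast
  show ?thesis using d agree unfolding lexl_def by (cases "x \<in> B n") auto
qed

lemma lexl_min: assumes sep: "\<And>x y. x \<noteq> y \<Longrightarrow> \<exists>n. x \<in> B n \<and> y \<notin> B n"
  and fin: "finite A" and ne: "A \<noteq> {}"
  shows "\<exists>m\<in>A. \<forall>z\<in>A. z \<noteq> m \<longrightarrow> lexl B m z"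
  using fin ne
proof (induction A rule: finite_ne_induct)
  case (singleton x) thus ?case by auto
next
  case (insert x F)
  then obtain m where m: "m \<in> F" "\<forall>z\<in>F. z \<noteq> m \<longrightarrow> lexl B m z" by blast
  show ?case
  proof (cases "lexl B x m")
    case True
    hence "\<forall>z\<in>insert x F. z \<noteq> x \<longrightarrow> lexl B x z" using m lexl_trans by (metis insertE)
    thus ?thesis by blast
  next
    case False
    have "x \<noteq> m" using m insert by auto
    hence "lexl B m x" using False lexl_total[OF sep] by blast
    hence "\<forall>z\<in>insert x F. z \<noteq> m \<longrightarrow> lexl B m z" using m by blast
    thus ?thesis using m by blast
  qed
qed

lemma lexl_meas: assumes B: "\<And>n. B n \<in> sets borel"
  and f: "f \<in> borel_measurable borel" and g: "g \<in> borel_measurable borel"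
  shows "{x. lexl B (f x) (g x)} \<in> sets borel"
proof -
  have [measurable]: "\<And>n. B n \<in> sets borel" using B .
  have [measurable]: "f \<in> borel_measurable borel" "g \<in> borel_measurable borel" using f g by auto
  have "Measurable.pred borel (\<lambda>x. lexl B (f x) (g x))" unfolding lexl_def by measurable
  thus ?thesis by (simp add: pred_def)
qed


locale colsetup = act \<Gamma> S a
  for \<Gamma> :: "('g, 'b) monoid_scheme" (structure) and S :: "'g set" and a :: "'g \<Rightarrow> 'x::polish_space \<Rightarrow> 'x" +
  fixes U0 U1 :: "'x set" and N :: nat and B :: "nat \<Rightarrow> 'x set" and idx :: "'g \<Rightarrow> nat"
  assumes U0b: "U0 \<in> sets borel"
    and part: "\<And>x. x \<in> U0 \<or> x \<in> U1"
    and fc0: "finite_components (induced_graph (graph_power_le (schreier_graph a S) N) U0) U0"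
    and fc1: "finite_components (induced_graph (graph_power_le (schreier_graph a S) N) U1) U1"
    and Nbig: "4 * card S \<le> N"
    and Bb: "\<And>n. B n \<in> sets borel"
    and sep: "\<And>x y. x \<noteq> y \<Longrightarrow> \<exists>n. x \<in> B n \<and> y \<notin> B n"
    and idx_inj: "inj_on idx S"
    and idx_lt: "\<And>s. s \<in> S \<Longrightarrow> idx s < card S"
    and evenord: "\<And>s. s \<in> S \<Longrightarrow> ord s \<noteq> 0 \<Longrightarrow> even (ord s)"
begin

definition cl :: "'g \<Rightarrow> nat" where "cl p = 2 * idx p + 2"

definition Dset :: "'g \<Rightarrow> 'x set" where
  "Dset p = (if ord p = 0 then {y. exact U0 (cl p) y \<and> exact U0 (cl p - 1) (a p y)}
             else {y. \<forall>j. 0 < j \<and> j < ord p \<longrightarrow> lexl B y (a (pw (inv p) j) y)})"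

definition hc :: "'g \<Rightarrow> 'x \<Rightarrow> nat" where
  "hc p x = hcol (ord p = 0) (Dset p) (inv p) (idx p) (idx (inv p)) (card S) x"

definition fcol :: "'g \<Rightarrow> 'x \<Rightarrow> nat" where
  "fcol g x = (if g = inv g then idx g else if idx g < idx (inv g) then hc g x else hc (inv g) (a g x))"

definition col :: "'x \<Rightarrow> 'x \<Rightarrow> nat" where
  "col x y = (if \<exists>g\<in>S. a g x = y then fcol (SOME g. g \<in> S \<and> a g x = y) x else 0)"

lemma Dset_hits: assumes p: "p \<in> S" shows "\<exists>k\<ge>1. a (pw (inv p) k) z \<in> Dset p"
proof (cases "ord p = 0")
  case True
  have "idx p < card S" using idx_lt p .
  hence c: "cl p \<ge> 2" "2 * cl p \<le> N" using Nbig unfolding cl_def by auto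
  show ?thesis using line_hits[OF p True c(1) c(2) part fc0 fc1, of z] True unfolding Dset_def by auto
next
  case False
  define n where "n = ord p"
  have pc: "p \<in> carrier \<Gamma>" using p S_carr by blast
  define h where "h = inv p"
  have hc: "h \<in> carrier \<Gamma>" using pc h_def by simp
  have nh: "ord h = n" using pc h_def n_def by simp
  have npos: "n > 0" using False n_def by simp
  define Orb where "Orb = (\<lambda>j. a (pw h j) z) ` {..<n}"
  have "finite Orb" "Orb \<noteq> {}" using npos unfolding Orb_def by auto
  then obtain m where m: "m \<in> Orb" "\<forall>w\<in>Orb. w \<noteq> m \<longrightarrow> lexl B m w" using lexl_min[OF sep] by blast
  then obtain j0 where j0: "j0 < n" "m = a (pw h j0) z" unfolding Orb_def by auto
  have mD: "m \<in> Dset p"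
  proof -
    have "lexl B m (a (pw h j) m)" if j: "0 < j" "j < n" for j
    proof -
      have "a (pw h j) m = a (pw h (j + j0)) z" using j0 orb_add[OF hc] by simp
      also have "\<dots> = a (pw h ((j + j0) mod n)) z" using orb_mod[OF hc] nh by simp
      finally have e: "a (pw h j) m = a (pw h ((j + j0) mod n)) z" .
      hence inO: "a (pw h j) m \<in> Orb" unfolding Orb_def using npos by auto
      have "a (pw h j) m \<noteq> m"
      proof
        assume "a (pw h j) m = m"
        hence "a (pw h 0) m = a (pw h j) m" by simp
        hence "n dvd j" using orb_eq[OF hc, of 0 m j] nh by simp
        thus False using j by (simp add: nat_dvd_not_less)
      qed
      thus ?thesis using m inO by blast
    qed
    thus ?thesis unfolding Dset_def using False n_def h_def by auto
  qed
  show ?thesis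
  proof (cases "j0 = 0")
    case True
    have "a (pw h n) z = z" using orb_per[OF hc] nh by simp
    hence "a (pw h n) z \<in> Dset p" using mD j0 True by simp
    thus ?thesis using npos h_def by (intro exI[of _ n]) simp
  next
    case False
    thus ?thesis using mD j0 h_def by (intro exI[of _ j0]) simp
  qed
qed

lemma Dset_match: assumes p: "p \<in> S" and o: "ord p = 0" and z: "z \<in> Dset p"
  shows "a (inv p) z \<notin> Dset p"
proof
  assume z': "a (inv p) z \<in> Dset p"
  have pc: "p \<in> carrier \<Gamma>" using p S_carr by blast
  have "exact U0 (cl p) z" using z o unfolding Dset_def by simp
  moreover have "exact U0 (cl p - 1) (a p (a (inv p) z))" using z' o unfolding Dset_def by simp
  hence "exact U0 (cl p - 1) z" using pc by simp
  ultimately have "cl p = cl p - 1" by (rule exact_unique)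
  thus False unfolding cl_def by simp
qed

lemma Dset_fin: assumes p: "p \<in> S" and o: "ord p \<noteq> 0" and z: "z \<in> Dset p"
  shows "K (Dset p) (inv p) z = ord p"
proof -
  define n where "n = ord p"
  have pc: "p \<in> carrier \<Gamma>" using p S_carr by blast
  define h where "h = inv p"
  have hc: "h \<in> carrier \<Gamma>" using pc h_def by simp
  have nh: "ord h = n" using pc h_def n_def by simp
  have npos: "n > 0" using o n_def by simp
  have zD: "\<forall>j. 0 < j \<and> j < n \<longrightarrow> lexl B z (a (pw h j) z)" using z o unfolding Dset_def n_def h_def by simp
  show ?thesis unfolding K_def
  proof (rule Least_equality)
    show "1 \<le> ord p \<and> a (pw (inv p) (ord p)) z \<in> Dset p"
      using orb_per[OF hc, of n z] nh z npos n_def h_def by simp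
  next
    fix k assume k: "1 \<le> k \<and> a (pw (inv p) k) z \<in> Dset p"
    show "ord p \<le> k"
    proof (rule ccontr)
      assume "\<not> ord p \<le> k"
      hence kn: "0 < k" "k < n" using k n_def by auto
      define w where "w = a (pw h k) z"
      have wD: "w \<in> Dset p" using k w_def h_def by simp
      hence wD': "\<forall>j. 0 < j \<and> j < n \<longrightarrow> lexl B w (a (pw h j) w)" using o unfolding Dset_def n_def h_def by simp
      have l1: "lexl B z w" using zD kn w_def by simp
      have "a (pw h (n - k)) w = a (pw h (n - k + k)) z" using orb_add[OF hc] w_def by simp
      also have "\<dots> = z" using kn orb_per[OF hc, of n z] nh by simp
      finally have eqz: "a (pw h (n - k)) w = z" .
      have "0 < n - k \<and> n - k < n" using kn by simp
      hence "lexl B w (a (pw h (n - k)) w)" using wD' by blast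
      hence "lexl B w z" using eqz by simp
      thus False using l1 lexl_asym[of B w z] by simp
    qed
  qed
qed

lemma hc_proper: assumes p: "p \<in> S" and ni: "p \<noteq> inv p"
  shows "hc p x \<noteq> hc p (a (inv p) x)"
proof -
  have pc: "p \<in> carrier \<Gamma>" using p S_carr by blast
  have ip: "inv p \<in> S" using S_inv p .
  have "idx p \<noteq> idx (inv p)" using idx_inj p ip ni by (metis inj_on_contraD)
  moreover have "idx p < card S" "idx (inv p) < card S" using idx_lt p ip by auto
  ultimately have ABE: "idx p \<noteq> idx (inv p)" "idx p \<noteq> card S" "idx (inv p) \<noteq> card S" by auto
  show ?thesis unfolding hc_def
  proof (rule hcol_proper[OF _ _ ABE])
    show "inv p \<in> carrier \<Gamma>" using pc by simp
    show "\<And>z. \<exists>k\<ge>1. a (pw (inv p) k) z \<in> Dset p" using Dset_hits[OF p] .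
    show "\<And>z. ord p = 0 \<Longrightarrow> z \<in> Dset p \<Longrightarrow> a (inv p) z \<notin> Dset p" using Dset_match[OF p] by blast
    show "\<And>z. \<not> ord p = 0 \<Longrightarrow> z \<in> Dset p \<Longrightarrow> even (K (Dset p) (inv p) z)"
      using Dset_fin[OF p] evenord[OF p] by simp
  qed
qed


lemma idx_ne: "g \<in> S \<Longrightarrow> d \<in> S \<Longrightarrow> g \<noteq> d \<Longrightarrow> idx g \<noteq> idx d"
  using idx_inj by (metis inj_on_contraD)

lemma inv_inv_S[simp]: "g \<in> S \<Longrightarrow> inv (inv g) = g"
  using S_carr' by simp

lemma fcol_sym: assumes g: "g \<in> S" shows "fcol (inv g) (a g x) = fcol g x"
proof -
  have gc: "g \<in> carrier \<Gamma>" using g S_carr by blast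
  have ig: "inv g \<in> S" using S_inv g .
  consider "g = inv g" | "g \<noteq> inv g" "idx g < idx (inv g)" | "g \<noteq> inv g" "\<not> idx g < idx (inv g)" by blast
  thus ?thesis
  proof cases
    case 1
    have e: "inv g = g" using 1 by (rule sym)
    have "fcol g y = idx g" for y unfolding fcol_def using e by simp
    thus ?thesis using e by simp
  next
    case 2
    have "inv g \<noteq> inv (inv g)" using 2 g by simp
    moreover have "\<not> idx (inv g) < idx (inv (inv g))" using 2 g by simp
    ultimately show ?thesis unfolding fcol_def using 2 g gc by simp
  next
    case 3
    have "inv g \<noteq> inv (inv g)" using 3 g by simp
    moreover have "idx (inv g) < idx (inv (inv g))" using 3 g idx_ne[OF g ig] by simp
    ultimately show ?thesis unfolding fcol_def using 3 g gc by simp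
  qed
qed

definition rep :: "'g \<Rightarrow> 'g" where "rep g = (if idx g < idx (inv g) then g else inv g)"

lemma fcol_range: assumes g: "g \<in> S" shows "fcol g x \<in> {idx g, idx (inv g), card S}"
  unfolding fcol_def hc_def using g by (auto simp: hcol_def S_carr')

lemma fcol_E: assumes g: "g \<in> S" and E: "fcol g x = card S"
  shows "g \<noteq> inv g \<and> (exact U0 (cl (rep g)) x \<or> exact U0 (cl (rep g) - 1) x)"
proof -
  have gc: "g \<in> carrier \<Gamma>" using g S_carr by blast
  have ig: "inv g \<in> S" using S_inv g .
  have lt: "idx g < card S" "idx (inv g) < card S" using idx_lt g ig by auto
  have ni: "g \<noteq> inv g" using E lt unfolding fcol_def by auto
  show ?thesis
  proof (cases "idx g < idx (inv g)")
    case True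
    hence "hcol (ord g = 0) (Dset g) (inv g) (idx g) (idx (inv g)) (card S) x = card S"
      using E ni unfolding fcol_def hc_def by simp
    hence "ord g = 0 \<and> x \<in> Dset g" using hcol_E[of "ord g = 0" "Dset g" "inv g" "idx g" "idx (inv g)" "card S" x] lt by simp
    hence "exact U0 (cl g) x" unfolding Dset_def by auto
    thus ?thesis using ni True unfolding rep_def by simp
  next
    case False
    hence "hcol (ord (inv g) = 0) (Dset (inv g)) (inv (inv g)) (idx (inv g)) (idx (inv (inv g))) (card S) (a g x) = card S"
      using E ni unfolding fcol_def hc_def by simp
    hence "ord (inv g) = 0 \<and> a g x \<in> Dset (inv g)"
      using hcol_E[of "ord (inv g) = 0" "Dset (inv g)" "inv (inv g)" "idx (inv g)" "idx (inv (inv g))" "card S" "a g x"] lt g by simp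
    hence "exact U0 (cl (inv g) - 1) (a (inv g) (a g x))" unfolding Dset_def by auto
    hence "exact U0 (cl (inv g) - 1) x" using gc by simp
    thus ?thesis using ni False unfolding rep_def by simp
  qed
qed

lemma fcol_proper: assumes g: "g \<in> S" and d: "d \<in> S" and ne: "g \<noteq> d"
  shows "fcol g x \<noteq> fcol d x"
proof (cases "d = inv g")
  case True
  have gc: "g \<in> carrier \<Gamma>" using g S_carr by blast
  have ig: "inv g \<in> S" using S_inv g .
  have ni: "g \<noteq> inv g" using True ne by simp
  show ?thesis
  proof (cases "idx g < idx (inv g)")
    case True': True
    have "fcol g x = hc g x" using ni True' unfolding fcol_def by simp
    moreover have "fcol (inv g) x = hc g (a (inv g) x)"
      using ni True' g unfolding fcol_def by (auto simp: gc)
    ultimately show ?thesis using hc_proper[OF g ni] True by simp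
  next
    case False
    have ni': "inv g \<noteq> inv (inv g)" using ni g by simp
    have lt: "idx (inv g) < idx (inv (inv g))" using False g idx_ne[OF g ig] ni by simp
    have "fcol (inv g) x = hc (inv g) x" using ni' lt unfolding fcol_def by simp
    moreover have "fcol g x = hc (inv g) (a (inv (inv g)) x)"
      using ni False g unfolding fcol_def by simp
    ultimately show ?thesis using hc_proper[OF ig ni', of x] True by metis
  qed
next
  case False
  have gc: "g \<in> carrier \<Gamma>" using g S_carr by blast
  have ig: "inv g \<in> S" using S_inv g .
  have id: "inv d \<in> S" using S_inv d .
  have dc: "d \<in> carrier \<Gamma>" using d S_carr by blast
  have d1: "inv g \<noteq> d" using False by simp
  have d2: "g \<noteq> inv d" using False dc by auto
  have d3: "inv g \<noteq> inv d"
  proof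
    assume "inv g = inv d"
    hence "inv (inv g) = inv (inv d)" by simp
    thus False using gc dc ne by simp
  qed
  have disj: "{idx g, idx (inv g)} \<inter> {idx d, idx (inv d)} = {}"
    using idx_ne[OF g d ne] idx_ne[OF ig d d1] idx_ne[OF g id d2] idx_ne[OF ig id d3] by auto
  show ?thesis
  proof
    assume eq: "fcol g x = fcol d x"
    have "fcol g x = card S"
    proof (rule ccontr)
      assume nE: "fcol g x \<noteq> card S"
      hence "fcol g x \<in> {idx g, idx (inv g)}" using fcol_range[OF g] by auto
      moreover have "fcol d x \<in> {idx d, idx (inv d)}" using fcol_range[OF d] nE eq by auto
      ultimately show False using eq disj by auto
    qed
    hence Eg: "exact U0 (cl (rep g)) x \<or> exact U0 (cl (rep g) - 1) x" using fcol_E[OF g] by blast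
    have Ed: "exact U0 (cl (rep d)) x \<or> exact U0 (cl (rep d) - 1) x" using fcol_E[OF d] eq \<open>fcol g x = card S\<close> by simp
    obtain r1 where r1: "r1 \<in> {cl (rep g), cl (rep g) - 1}" "exact U0 r1 x" using Eg by blast
    obtain r2 where r2: "r2 \<in> {cl (rep d), cl (rep d) - 1}" "exact U0 r2 x" using Ed by blast
    have "r1 = r2" by (rule exact_unique[OF r1(2) r2(2)])
    hence ieq: "idx (rep g) = idx (rep d)" using r1(1) r2(1) unfolding cl_def by (auto; presburger)
    have "idx (rep g) \<in> {idx g, idx (inv g)}" "idx (rep d) \<in> {idx d, idx (inv d)}" unfolding rep_def by auto
    thus False using disj ieq by auto
  qed
qed

lemma col_eq: assumes g: "g \<in> S" shows "col x (a g x) = fcol g x"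
proof -
  have ex: "\<exists>g'\<in>S. a g' x = a g x" using g by blast
  have "(SOME g'. g' \<in> S \<and> a g' x = a g x) = g"
  proof (rule some_equality)
    show "g \<in> S \<and> a g x = a g x" using g by simp
    fix g' assume "g' \<in> S \<and> a g' x = a g x"
    thus "g' = g" using act_inj g S_carr by blast
  qed
  thus ?thesis unfolding col_def using ex by simp
qed


lemma exact_meas: "{y. exact U0 r y} \<in> sets borel"
proof -
  have "{y. exact U0 r y} = Zs U0 r \<inter> (if r = 0 then UNIV else - Zs U0 (r - 1))"
    unfolding exact_def by auto
  thus ?thesis using Z_meas[OF U0b] by auto
qed

lemma Dset_meas: assumes p: "p \<in> S" shows "Dset p \<in> sets borel"
proof (cases "ord p = 0")
  case True
  have pc: "p \<in> carrier \<Gamma>" using p S_carr by blast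
  have "Dset p = {y. exact U0 (cl p) y} \<inter> (a p -` {y. exact U0 (cl p - 1) y} \<inter> space borel)"
    using True unfolding Dset_def by auto
  moreover have "a p -` {y. exact U0 (cl p - 1) y} \<inter> space borel \<in> sets borel"
    by (rule measurable_sets[OF act_meas[OF pc] exact_meas])
  ultimately show ?thesis using exact_meas by auto
next
  case False
  have pc: "p \<in> carrier \<Gamma>" using p S_carr by blast
  have "Dset p = (\<Inter>j\<in>{0<..<ord p}. {y. lexl B ((\<lambda>y. y) y) (a (pw (inv p) j) y)})"
    using False unfolding Dset_def by auto
  moreover have "{y. lexl B ((\<lambda>y. y) y) (a (pw (inv p) j) y)} \<in> sets borel" for j
    by (rule lexl_meas[OF Bb]) (auto intro: act_meas simp: pc)
  moreover have "(\<Inter>j\<in>{0<..<ord p}. {y. lexl B ((\<lambda>y. y) y) (a (pw (inv p) j) y)}) \<in> sets borel"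
  proof (cases "{0<..<ord p} = {}")
    case True thus ?thesis by simp
  next
    case False thus ?thesis using calculation(2) by (intro sets.finite_INT) auto
  qed
  ultimately show ?thesis by simp
qed

lemma K_meas: assumes h: "h \<in> carrier \<Gamma>" and D: "D \<in> sets borel"
  shows "K D h \<in> borel \<rightarrow>\<^sub>M count_space UNIV"
proof -
  have [measurable]: "D \<in> sets borel" using D .
  have [measurable]: "a (pw h i) \<in> borel \<rightarrow>\<^sub>M borel" for i using h by (simp add: act_meas)
  show ?thesis unfolding K_def[abs_def] by measurable
qed

lemma hc_meas: assumes p: "p \<in> S" shows "hc p \<in> borel \<rightarrow>\<^sub>M count_space UNIV"
proof -
  have pc: "p \<in> carrier \<Gamma>" using p S_carr by blast
  have [measurable]: "Dset p \<in> sets borel" using Dset_meas[OF p] .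
  have [measurable]: "K (Dset p) (inv p) \<in> borel \<rightarrow>\<^sub>M count_space UNIV"
    using K_meas[OF _ Dset_meas[OF p]] pc by simp
  show ?thesis unfolding hc_def[abs_def] hcol_def by measurable
qed

lemma fcol_meas: assumes g: "g \<in> S" shows "fcol g \<in> borel \<rightarrow>\<^sub>M count_space UNIV"
proof -
  have gc: "g \<in> carrier \<Gamma>" using g S_carr by blast
  have [measurable]: "hc g \<in> borel \<rightarrow>\<^sub>M count_space UNIV" using hc_meas[OF g] .
  have [measurable]: "hc (inv g) \<in> borel \<rightarrow>\<^sub>M count_space UNIV" using hc_meas[OF S_inv[OF g]] .
  have [measurable]: "a g \<in> borel \<rightarrow>\<^sub>M borel" using act_meas[OF gc] .
  show ?thesis unfolding fcol_def[abs_def] by measurable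
qed

lemma col_main: "borel_edge_coloring G {..card S} col"
  unfolding borel_edge_coloring_def
proof (intro conjI allI impI ballI)
  fix x y assume "G x y"
  then obtain g where g: "g \<in> S" "y = a g x" using G_E by blast
  have gc: "g \<in> carrier \<Gamma>" using g S_carr by blast
  have e1: "col x y = fcol g x" using col_eq[OF g(1)] g by simp
  have "x = a (inv g) y" using g gc by simp
  hence "col y x = fcol (inv g) y" using col_eq[OF S_inv[OF g(1)], of y] by simp
  also have "\<dots> = fcol g x" using fcol_sym[OF g(1)] g by simp
  finally show "col x y = col y x" using e1 by simp
  show "col x y \<in> {..card S}" using e1 fcol_range[OF g(1), of x] idx_lt[OF g(1)] idx_lt[OF S_inv[OF g(1)]] by auto
next
  fix x y z assume "G x y" "G x z" "y \<noteq> z"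
  then obtain g d where g: "g \<in> S" "y = a g x" and d: "d \<in> S" "z = a d x" using G_E by blast
  have "g \<noteq> d" using g d \<open>y \<noteq> z\<close> by blast
  thus "col x y \<noteq> col x z" using fcol_proper[OF g(1) d(1)] col_eq[OF g(1)] col_eq[OF d(1)] g d by simp
next
  fix k :: nat
  let ?M = "borel \<Otimes>\<^sub>M borel :: ('x \<times> 'x) measure"
  have eq: "{(x, y). G x y \<and> col x y = k} =
    (\<Union>g\<in>S. {z \<in> space ?M. snd z = a g (fst z)} \<inter> {z \<in> space ?M. fcol g (fst z) = k})"
  proof (rule equalityI; rule subsetI)
    fix z assume "z \<in> {(x, y). G x y \<and> col x y = k}"
    then obtain x y where z: "z = (x, y)" "G x y" "col x y = k" by blast
    then obtain g where g: "g \<in> S" "y = a g x" using G_E by blast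
    have "fcol g x = k" using z g col_eq[OF g(1)] by simp
    thus "z \<in> (\<Union>g\<in>S. {z \<in> space ?M. snd z = a g (fst z)} \<inter> {z \<in> space ?M. fcol g (fst z) = k})"
      using z g by (auto simp: space_pair_measure)
  next
    fix z assume "z \<in> (\<Union>g\<in>S. {z \<in> space ?M. snd z = a g (fst z)} \<inter> {z \<in> space ?M. fcol g (fst z) = k})"
    then obtain g where g: "g \<in> S" "snd z = a g (fst z)" "fcol g (fst z) = k" by blast
    have "G (fst z) (snd z)" using G_step[OF g(1)] g(2) by simp
    moreover have "col (fst z) (snd z) = k" using g col_eq[OF g(1)] by simp
    ultimately show "z \<in> {(x, y). G x y \<and> col x y = k}" by (cases z) simp
  qed
  have "{z \<in> space ?M. snd z = a g (fst z)} \<inter> {z \<in> space ?M. fcol g (fst z) = k} \<in> sets ?M" if g: "g \<in> S" for g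
  proof -
    have gc: "g \<in> carrier \<Gamma>" using g S_carr by blast
    have m1: "(\<lambda>z. a g (fst z)) \<in> borel_measurable ?M"
      using measurable_comp[OF measurable_fst act_meas[OF gc]] by (simp add: comp_def)
    have s1: "{z \<in> space ?M. snd z = a g (fst z)} \<in> sets ?M"
      by (rule measurable_equality_set[OF measurable_snd m1])
    have m2: "(\<lambda>z. fcol g (fst z)) \<in> ?M \<rightarrow>\<^sub>M count_space UNIV"
      using measurable_comp[OF measurable_fst fcol_meas[OF g]] by (simp add: comp_def)
    have "(\<lambda>z. fcol g (fst z)) -` {k} \<inter> space ?M \<in> sets ?M"
      by (rule measurable_sets[OF m2]) simp
    moreover have "{z \<in> space ?M. fcol g (fst z) = k} = (\<lambda>z. fcol g (fst z)) -` {k} \<inter> space ?M" by auto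
    ultimately show ?thesis using s1 by auto
  qed
  thus "{(x, y). G x y \<and> col x y = k} \<in> sets ?M" unfolding eq using S_fin by auto
qed

end


theorem theorem1:
  fixes \<Gamma> :: "('g, 'b) monoid_scheme" and S :: "'g set"
    and a :: "'g \<Rightarrow> 'x::polish_space \<Rightarrow> 'x"
  assumes "marked_group \<Gamma> S"
    and "borel_action \<Gamma> a"
    and "free_action \<Gamma> a"
    and "asi_B (schreier_graph a S) = 1"
    and "\<forall>\<gamma>\<in>S. \<not> (group.ord \<Gamma> \<gamma> \<noteq> 0 \<and> odd (group.ord \<Gamma> \<gamma>))"
  shows "\<exists>c :: 'x \<Rightarrow> 'x \<Rightarrow> nat. borel_edge_coloring (schreier_graph a S) {..card S} c"
proof -
  have A: "act \<Gamma> S a" using assms(1-3) by (simp add: act_def)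
  interpret act \<Gamma> S a by (rule A)
  have ex: "\<exists>s. asi_witness G s" and L: "(LEAST s. asi_witness G s) = 1"
    using assms(4) unfolding asi_B_def by (auto split: if_splits simp: one_enat_def)
  have W1: "asi_witness G 1" using LeastI_ex[OF ex] L by simp
  define N where "N = 4 * card S + 1"
  obtain U :: "nat \<Rightarrow> 'x set" where
    Ub: "\<forall>i\<le>1. U i \<in> sets borel" and
    Uun: "(\<Union>i\<le>1. U i) = UNIV" and
    Ufc: "\<forall>i\<le>1. finite_components (induced_graph (graph_power_le G N) (U i)) (U i)"
  proof -
    have Npos: "N > 0" unfolding N_def by simp
    show ?thesis using W1[unfolded asi_witness_def, rule_format, OF Npos] that by blast
  qed
  have part: "x \<in> U 0 \<or> x \<in> U 1" for x
  proof -
    have "x \<in> (\<Union>i\<le>1. U i)" using Uun by simp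
    then obtain i where "i \<le> (1::nat)" "x \<in> U i" by blast
    thus ?thesis by (cases i) auto
  qed
  obtain BB :: "'x set set" where BB: "countable BB" "topological_basis BB" using ex_countable_basis by blast
  define BB' where "BB' = insert UNIV BB"
  have BB': "countable BB'" "BB' \<noteq> {}" using BB unfolding BB'_def by auto
  define B where "B = from_nat_into BB'"
  have Bb: "B n \<in> sets borel" for n
  proof -
    have "B n \<in> BB'" unfolding B_def using from_nat_into[OF BB'(2)] .
    hence "open (B n)" using BB(2) topological_basis_open unfolding BB'_def by auto
    thus ?thesis by simp
  qed
  have sep: "\<exists>n. x \<in> B n \<and> y \<notin> B n" if ne: "x \<noteq> y" for x y
  proof -
    have "open (- {y})" by (simp add: open_Compl)
    moreover have "x \<in> - {y}" using ne by simp
    ultimately obtain V where V: "V \<in> BB" "x \<in> V" "V \<subseteq> - {y}" using topological_basisE[OF BB(2)] by metis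
    have "V \<in> BB'" using V unfolding BB'_def by simp
    then obtain n where "from_nat_into BB' n = V" using from_nat_into_surj[OF BB'(1)] by blast
    thus ?thesis using V unfolding B_def by blast
  qed
  obtain idx where idx: "bij_betw idx S {0..<card S}" using ex_bij_betw_finite_nat[OF S_fin] by blast
  have idx_inj: "inj_on idx S" using idx by (simp add: bij_betw_def)
  have idx_lt: "idx s < card S" if "s \<in> S" for s using idx that by (auto simp: bij_betw_def)
  have evenord: "even (ord s)" if "s \<in> S" "ord s \<noteq> 0" for s using assms(5) that by blast
  have C: "colsetup \<Gamma> S a (U 0) (U 1) N B idx"
    unfolding colsetup_def colsetup_axioms_def
  proof (intro conjI allI impI)
    show "act \<Gamma> S a" by (rule A)
    show "U 0 \<in> sets borel" using Ub by simp
    show "finite_components (induced_graph (graph_power_le G N) (U 0)) (U 0)" using Ufc by simp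
    show "finite_components (induced_graph (graph_power_le G N) (U 1)) (U 1)" using Ufc by simp
    show "4 * card S \<le> N" unfolding N_def by simp
    show "inj_on idx S" by (rule idx_inj)
  qed (use part Bb sep idx_lt evenord in auto)
  interpret C: colsetup \<Gamma> S a "U 0" "U 1" N B idx by (rule C)
  show ?thesis using C.col_main by blast
qed

end
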